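(* Let $A\in\mathbb{R}^{m\times n}$, $b\in\mathbb{R}^m$, $C\in\mathbb{R}^{p\times n}$, $d\in\mathbb{R}^p$ and let $\mathcal{Y}\subseteq\mathbb{R}^n$ be a polyhedral set, and assume the polyhedral set $\mathcal{X}^*=\{x\in\mathcal{Y}:Ax=b,\ Cx\le d\}$ is nonempty. Let $\delta\in(0,2)$, $\beta\in(0,2)$, $x_0\in\mathcal{Y}$, and let $x_k$ be generated by algorithm SSP-LS described in the context. Then for all $k\ge0$, $$\mathbb{E}[\mathrm{dist}^2(x_k,\mathcal{X}^* )]\le\Big(1-\frac1c\min\Big(\frac{\delta(2-\delta)}{2\kappa_{\mathrm{block}}^2},\ \frac{2-\delta}{4\delta},\ \frac{\beta(2-\beta)}{2}\Big)\Big)^k\mathrm{dist}^2(x_0,\mathcal{X}^* ).$$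
   Context: The rows of $A$ (with $b$) are partitioned into blocks $(A_\zeta^T,b_\zeta)$, $\zeta\in\Omega_1$, so $A_\zeta^T$ is a block of rows of $A$; the rows of $C$ (with $d$) are partitioned into blocks $(C_\xi^T,d_\xi)$, $\xi\in\Omega_2$. $\mathbf{P}_1$, $\mathbf{P}_2$ are probability distributions on the (finite) block index sets $\Omega_1$, $\Omega_2$. Define $\mathcal{A}_\zeta=\{x:A_\zeta^Tx=b_\zeta\}$ and $\mathcal{C}_\xi=\{x:C_\xi^Tx\le d_\xi\}$, so $\mathcal{X}^*=\mathcal{Y}\cap\bigcap_\zeta\mathcal{A}_\zeta\cap\bigcap_\xi\mathcal{C}_\xi$. $\Pi_S$ denotes Euclidean projection onto a closed convex set $S$, $\mathrm{dist}$ the Euclidean distance. The constant $c\in(0,\infty)$ is a Hoffman constant: $\mathrm{dist}^2(u,\mathcal{X}^* )\le c\,\mathbb{E}_{\zeta\sim\mathbf{P}_1,\xi\sim\mathbf{P}_2}[\mathrm{dist}^2(u,\mathcal{A}_\zeta)+\mathrm{dist}^2(u,\mathcal{C}_\xi)]$ for all $u\in\mathcal{Y}$ (such $c$ exists since $\mathcal{X}^*$ is a nonempty polyhedron). The maximum block condition number is $\kappa_{\mathrm{block}}=\max_{\zeta}\|A_\zeta^T\|\cdot\|(A_\zeta^T)^\dagger\|$, the maximum over blocks $\zeta$ in the support of $\mathbf{P}_1$, with $\dagger$ the Moore–Penrose pseudoinverse and $\|\cdot\|$ the spectral norm. Algorithm SSP-LS: for $k\ge0$, sample $\zeta_k\sim\mathbf{P}_1$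 and $\xi_k\sim\mathbf{P}_2$ independently of each other and of the past, and set $\alpha_k=\delta\frac{\|A_{\zeta_k}^Tx_k-b_{\zeta_k}\|^2}{\|A_{\zeta_k}(A_{\zeta_k}^Tx_k-b_{\zeta_k})\|^2}$ (with $0/0=0$), $v_k=x_k-\alpha_kA_{\zeta_k}(A_{\zeta_k}^Tx_k-b_{\zeta_k})$, $z_k=(1-\beta)v_k+\beta\Pi_{\mathcal{C}_{\xi_k}}(v_k)$, $x_{k+1}=\Pi_{\mathcal{Y}}(z_k)$. *)

theory Defs
  imports "HOL-Analysis.Analysis" "HOL-Probability.Probability"
begin

text \<open>Rows not belonging to block z are replaced by zero rows; this does not
  change the residual norm, the spectral norm or the pseudoinverse norm.\<close>

definition blk_mat :: "real^'n^'m \<Rightarrow> ('m \<Rightarrow> 'z) \<Rightarrow> 'z \<Rightarrow> real^'n^'m" where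
  "blk_mat A blk z = (\<chi> i. if blk i = z then A $ i else 0)"

definition blk_vec :: "real^'m \<Rightarrow> ('m \<Rightarrow> 'z) \<Rightarrow> 'z \<Rightarrow> real^'m" where
  "blk_vec b blk z = (\<chi> i. if blk i = z then b $ i else 0)"

definition pinv :: "real^'n^'m \<Rightarrow> real^'m^'n" where
  "pinv M = (THE P. M ** P ** M = M \<and> P ** M ** P = P \<and>
       transpose (M ** P) = M ** P \<and> transpose (P ** M) = P ** M)"

definition spec_norm :: "real^'n^'m \<Rightarrow> real" where
  "spec_norm M = onorm (\<lambda>x. M *v x)"

definition kappa_block :: "real^'n^'m \<Rightarrow> ('m \<Rightarrow> 'z::finite) \<Rightarrow> 'z pmf \<Rightarrow> real" where
  "kappa_block A blk P1 =
     Max ((\<lambda>z. spec_norm (blk_mat A blk z) * spec_norm (pinv (blk_mat A blk z))) ` set_pmf P1)"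

definition eq_set :: "real^'n^'m \<Rightarrow> real^'m \<Rightarrow> ('m \<Rightarrow> 'z) \<Rightarrow> 'z \<Rightarrow> (real^'n) set" where
  "eq_set A b blk z = {x. \<forall>i. blk i = z \<longrightarrow> A $ i \<bullet> x = b $ i}"

definition ineq_set :: "real^'n^'p \<Rightarrow> real^'p \<Rightarrow> ('p \<Rightarrow> 'w) \<Rightarrow> 'w \<Rightarrow> (real^'n) set" where
  "ineq_set C d blk w = {x. \<forall>i. blk i = w \<longrightarrow> C $ i \<bullet> x \<le> d $ i}"

definition sol_set :: "(real^'n) set \<Rightarrow> real^'n^'m \<Rightarrow> real^'m \<Rightarrow> real^'n^'p \<Rightarrow> real^'p \<Rightarrow> (real^'n) set" where
  "sol_set Y A b C d = {x \<in> Y. A *v x = b \<and> (\<forall>i. (C *v x) $ i \<le> d $ i)}"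

definition ssp_step ::
  "real \<Rightarrow> real \<Rightarrow> (real^'n) set \<Rightarrow> real^'n^'m \<Rightarrow> real^'m \<Rightarrow> ('m \<Rightarrow> 'z)
   \<Rightarrow> real^'n^'p \<Rightarrow> real^'p \<Rightarrow> ('p \<Rightarrow> 'w) \<Rightarrow> real^'n \<Rightarrow> 'z \<Rightarrow> 'w \<Rightarrow> real^'n" where
  "ssp_step \<delta> \<beta> Y A b blk1 C d blk2 x z w =
     (let r = blk_mat A blk1 z *v x - blk_vec b blk1 z;
          g = transpose (blk_mat A blk1 z) *v r;
          \<alpha> = \<delta> * (norm r)^2 / (norm g)^2;
          v = x - \<alpha> *\<^sub>R g;
          zz = (1 - \<beta>) *\<^sub>R v + \<beta> *\<^sub>R closest_point (ineq_set C d blk2 w) v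
      in closest_point Y zz)"

text \<open>Distribution of the iterate x_k (samples independent of each other and the past).\<close>
primrec ssp_dist ::
  "real \<Rightarrow> real \<Rightarrow> (real^'n) set \<Rightarrow> real^'n^'m \<Rightarrow> real^'m \<Rightarrow> ('m \<Rightarrow> 'z) \<Rightarrow> 'z pmf
   \<Rightarrow> real^'n^'p \<Rightarrow> real^'p \<Rightarrow> ('p \<Rightarrow> 'w) \<Rightarrow> 'w pmf \<Rightarrow> real^'n \<Rightarrow> nat \<Rightarrow> (real^'n) pmf" where
  "ssp_dist \<delta> \<beta> Y A b blk1 P1 C d blk2 P2 x0 0 = return_pmf x0"
| "ssp_dist \<delta> \<beta> Y A b blk1 P1 C d blk2 P2 x0 (Suc k) =
     bind_pmf (ssp_dist \<delta> \<beta> Y A b blk1 P1 C d blk2 P2 x0 k)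
       (\<lambda>x. map_pmf (\<lambda>(z, w). ssp_step \<delta> \<beta> Y A b blk1 C d blk2 x z w) (pair_pmf P1 P2))"

end

theory Submission
  imports Defs
begin


lemma linear_from_unique:
  fixes R :: "'a::real_vector \<Rightarrow> 'b::real_vector \<Rightarrow> bool"
  assumes ex: "\<And>y. \<exists>u. R y u"
    and un: "\<And>y u u'. R y u \<Longrightarrow> R y u' \<Longrightarrow> u = u'"
    and add: "\<And>y y' u u'. R y u \<Longrightarrow> R y' u' \<Longrightarrow> R (y + y') (u + u')"
    and scl: "\<And>y u c. R y u \<Longrightarrow> R (c *\<^sub>R y) (c *\<^sub>R u)"
  shows "linear (\<lambda>y. THE u. R y u)" "\<And>y. R y (THE u. R y u)"
proof -
  have th: "R y (THE u. R y u)" for y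
    using ex[of y] un by (metis theI)
  have eq: "R y u \<Longrightarrow> (THE u. R y u) = u" for y u
    using un by blast
  show "R y (THE u. R y u)" for y by (rule th)
  show "linear (\<lambda>y. THE u. R y u)"
  proof (rule linearI)
    fix y y' show "(THE u. R (y + y') u) = (THE u. R y u) + (THE u. R y' u)"
      by (rule eq) (intro add th)
  next
    fix c y show "(THE u. R (c *\<^sub>R y) u) = c *\<^sub>R (THE u. R y u)"
      by (rule eq) (intro scl th)
  qed
qed

lemma proj_exists:
  fixes S :: "'a::euclidean_space set"
  assumes "subspace S"
  shows "\<exists>Q. linear Q \<and> (\<forall>x. Q x \<in> S) \<and> (\<forall>x. \<forall>s\<in>S. (x - Q x) \<bullet> s = 0)"
proof -
  define R where "R x y \<longleftrightarrow> y \<in> S \<and> (\<forall>s\<in>S. (x - y) \<bullet> s = 0)" for x y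
  have ex: "\<exists>u. R y u" for y
  proof -
    obtain a c where "a \<in> span S" "\<And>w. w \<in> span S \<Longrightarrow> orthogonal c w" "y = a + c"
      using orthogonal_subspace_decomp_exists by blast
    moreover have "span S = S" using assms by (simp add: span_eq_iff)
    ultimately show ?thesis unfolding R_def
      by (intro exI[of _ a]) (auto simp: orthogonal_def)
  qed
  have un: "u = u'" if "R y u" "R y u'" for y u u'
  proof -
    have "u - u' \<in> S" using that assms unfolding R_def by (simp add: subspace_diff)
    then have "(y - u') \<bullet> (u - u') - (y - u) \<bullet> (u - u') = 0"
      using that unfolding R_def by auto
    then have "(u - u') \<bullet> (u - u') = 0" by (simp add: inner_diff_left inner_diff_right)
    then show ?thesis by simp
  qed
  have add: "R (y + y') (u + u')" if "R y u" "R y' u'" for y y' u u'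
    using that assms unfolding R_def
    by (auto simp: subspace_add algebra_simps inner_add_left inner_diff_left)
  have scl: "R (c *\<^sub>R y) (c *\<^sub>R u)" if "R y u" for y u c
  proof -
    have "(c *\<^sub>R y - c *\<^sub>R u) = c *\<^sub>R (y - u)" by (simp add: algebra_simps)
    then show ?thesis using that assms unfolding R_def
      by (auto simp: subspace_scale)
  qed
  have L: "linear (\<lambda>y. THE u. R y u)" and P: "\<And>y. R y (THE u. R y u)"
    using linear_from_unique[of R] ex un add scl by blast+
  show ?thesis
    by (rule exI[of _ "\<lambda>y. THE u. R y u"]) (use L P in \<open>simp add: R_def\<close>)
qed

lemma dot_transpose: "((A::real^'n^'m) *v x) \<bullet> y = x \<bullet> (transpose A *v y)"
  using adjoint_works[of "\<lambda>x. A *v x" x y] adjoint_matrix[of A]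
  by (simp add: matrix_vector_mul_linear)

lemma vec_eq_by_inner: "(\<And>z. (u::'a::real_inner) \<bullet> z = v \<bullet> z) \<Longrightarrow> u = v"
  by (metis inner_diff_left inner_eq_zero_iff right_minus_eq)

lemma sym_matrix:
  fixes X :: "real^'n^'n"
  assumes "\<And>y z. (X *v y) \<bullet> z = y \<bullet> (X *v z)"
  shows "transpose X = X"
proof -
  have "transpose X *v z = X *v z" for z
    by (rule vec_eq_by_inner) (metis assms dot_transpose inner_commute)
  then show ?thesis by (simp add: matrix_eq)
qed

lemma proj_sym:
  fixes Q :: "'a::real_inner \<Rightarrow> 'a"
  assumes "\<And>x. Q x \<in> S" "\<And>x s. s \<in> S \<Longrightarrow> (x - Q x) \<bullet> s = 0"
  shows "Q y \<bullet> z = y \<bullet> Q z"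
proof -
  have "Q y \<bullet> z = Q y \<bullet> Q z + (z - Q z) \<bullet> Q y" by (simp add: inner_diff_left inner_diff_right inner_commute)
  also have "\<dots> = Q y \<bullet> Q z" using assms by simp
  also have "\<dots> = (y - Q y) \<bullet> Q z + Q y \<bullet> Q z" using assms by simp
  also have "\<dots> = y \<bullet> Q z" by (simp add: inner_diff_left)
  finally show ?thesis .
qed

lemma pinv_exists:
  fixes M :: "real^'n^'m"
  shows "\<exists>P. M ** P ** M = M \<and> P ** M ** P = P \<and> transpose (M ** P) = M ** P \<and> transpose (P ** M) = P ** M"
proof -
  define V where "V = range (\<lambda>y. transpose M *v y)"
  define W where "W = range (\<lambda>x. M *v x)"
  have sV: "subspace V" unfolding V_def
    by (intro linear_subspace_image subspace_UNIV matrix_vector_mul_linear)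
  have sW: "subspace W" unfolding W_def
    by (intro linear_subspace_image subspace_UNIV matrix_vector_mul_linear)
  obtain QV where QV: "linear QV" "\<And>x. QV x \<in> V" "\<And>x s. s \<in> V \<Longrightarrow> (x - QV x) \<bullet> s = 0"
    using proj_exists[OF sV] by blast
  obtain QW where QW: "linear QW" "\<And>x. QW x \<in> W" "\<And>x s. s \<in> W \<Longrightarrow> (x - QW x) \<bullet> s = 0"
    using proj_exists[OF sW] by blast
  have ker: "M *v x = M *v QV x" for x
  proof -
    have "(M *v (x - QV x)) \<bullet> (M *v (x - QV x)) = 0"
      unfolding dot_transpose using QV(3)[of "transpose M *v (M *v (x - QV x))" x]
      by (simp add: V_def)
    then show ?thesis by (simp add: matrix_vector_mult_diff_distrib)
  qed
  have QWfix: "QW w = w" if "w \<in> W" for w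
  proof -
    have "w - QW w \<in> W" using that QW(2) sW by (simp add: subspace_diff)
    then have "(w - QW w) \<bullet> (w - QW w) = 0" using QW(3) by blast
    then show ?thesis by simp
  qed
  define R where "R y u \<longleftrightarrow> u \<in> V \<and> M *v u = QW y" for y u
  have ex: "\<exists>u. R y u" for y
  proof -
    obtain x0 where "QW y = M *v x0" using QW(2)[of y] unfolding W_def by blast
    then show ?thesis by (intro exI[of _ "QV x0"]) (simp add: R_def QV(2) ker[symmetric])
  qed
  have un: "u = u'" if "R y u" "R y u'" for y u u'
  proof -
    have "u - u' \<in> V" using that sV unfolding R_def by (simp add: subspace_diff)
    then obtain t where t: "u - u' = transpose M *v t" unfolding V_def by blast
    have "M *v (u - u') = 0" using that unfolding R_def by (simp add: matrix_vector_mult_diff_distrib)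
    moreover have "(M *v (u - u')) \<bullet> t = (u - u') \<bullet> (u - u')"
      by (simp only: dot_transpose t[symmetric])
    ultimately have "(u - u') \<bullet> (u - u') = 0" by simp
    then show ?thesis by simp
  qed
  have add: "R (y + y') (u + u')" if "R y u" "R y' u'" for y y' u u'
    using that sV QW(1) unfolding R_def
    by (auto simp: subspace_add matrix_vector_right_distrib linear_add)
  have scl: "R (c *\<^sub>R y) (c *\<^sub>R u)" if "R y u" for y u c
    using that sV QW(1) unfolding R_def
    by (auto simp: subspace_scale linear_scale matrix_vector_mult_scaleR)
  define Pf where "Pf y = (THE u. R y u)" for y
  have L: "linear Pf" and RP: "\<And>y. R y (Pf y)"
    unfolding Pf_def using linear_from_unique[of R] ex un add scl by blast+
  define P where "P = matrix Pf"
  have Pv: "P *v y = Pf y" for y unfolding P_def using L by (simp add: matrix_works)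
  have MP: "M *v (P *v y) = QW y" for y using RP[of y] unfolding Pv R_def by simp
  have PM: "P *v (M *v x) = QV x" for x
  proof -
    have "R (M *v x) (QV x)" unfolding R_def using QV(2) ker QWfix[of "M *v x"]
      by (simp add: W_def)
    from un[OF RP this] show ?thesis by (simp add: Pv)
  qed
  have PQ: "P *v QW y = P *v y" for y
  proof -
    have "R (QW y) (Pf y)" using RP[of y] QWfix[OF QW(2)] unfolding R_def by simp
    from un[OF RP this] show ?thesis by (simp add: Pv)
  qed
  have e1: "M ** P ** M = M"
    by (simp add: matrix_eq flip: matrix_vector_mul_assoc add: PM ker[symmetric])
  have e2: "P ** M ** P = P"
    by (simp add: matrix_eq flip: matrix_vector_mul_assoc add: MP PQ)
  have e3: "transpose (M ** P) = M ** P"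
    by (rule sym_matrix) (simp flip: matrix_vector_mul_assoc add: MP proj_sym[of QW W, OF QW(2) QW(3)])
  have e4: "transpose (P ** M) = P ** M"
    by (rule sym_matrix) (simp flip: matrix_vector_mul_assoc add: PM proj_sym[of QV V, OF QV(2) QV(3)])
  show ?thesis using e1 e2 e3 e4 by blast
qed

lemma pinv_unique:
  fixes M :: "real^'n^'m"
  assumes a1: "M ** X ** M = M" and a2: "X ** M ** X = X" and a3: "transpose (M ** X) = M ** X"
    and a4: "transpose (X ** M) = X ** M"
    and b1: "M ** Y ** M = M" and b2: "Y ** M ** Y = Y" and b3: "transpose (M ** Y) = M ** Y"
    and b4: "transpose (Y ** M) = Y ** M"
  shows "X = Y"
proof -
  have tM1: "transpose M = transpose M ** (M ** Y)"
  proof -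
    have "transpose M = transpose ((M ** Y) ** M)" using b1 by simp
    also have "\<dots> = transpose M ** transpose (M ** Y)" by (simp only: matrix_transpose_mul)
    finally show ?thesis by (simp only: b3)
  qed
  have tM2: "transpose M = (X ** M) ** transpose M"
  proof -
    have "transpose M = transpose (M ** (X ** M))" using a1 by (simp only: matrix_mul_assoc)
    also have "\<dots> = transpose (X ** M) ** transpose M" by (simp only: matrix_transpose_mul)
    finally show ?thesis by (simp only: a4)
  qed
  have tX: "M ** X = transpose X ** transpose M"
  proof -
    have "M ** X = transpose (M ** X)" using a3 by simp
    also have "\<dots> = transpose X ** transpose M" by (rule matrix_transpose_mul)
    finally show ?thesis .
  qed
  have tY: "Y ** M = transpose M ** transpose Y"
  proof -
    have "Y ** M = transpose (Y ** M)" using b4 by simp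
    also have "\<dots> = transpose M ** transpose Y" by (rule matrix_transpose_mul)
    finally show ?thesis .
  qed
  have "X = X ** (M ** X)" using a2 by (simp only: matrix_mul_assoc)
  also have "\<dots> = X ** (transpose X ** transpose M)" by (simp only: tX)
  also have "\<dots> = X ** (transpose X ** (transpose M ** (M ** Y)))" by (simp only: tM1[symmetric])
  also have "\<dots> = X ** ((transpose X ** transpose M) ** (M ** Y))" by (simp only: matrix_mul_assoc)
  also have "\<dots> = X ** ((M ** X) ** (M ** Y))" by (simp only: tX)
  also have "\<dots> = (X ** M ** X) ** M ** Y" by (simp only: matrix_mul_assoc)
  also have "\<dots> = X ** M ** Y" by (simp only: a2)
  finally have a: "X = X ** M ** Y" .
  have "Y = (Y ** M) ** Y" using b2 by simp
  also have "\<dots> = (transpose M ** transpose Y) ** Y" by (simp only: tY)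
  also have "\<dots> = (((X ** M) ** transpose M) ** transpose Y) ** Y" by (simp only: tM2[symmetric])
  also have "\<dots> = (X ** M) ** (transpose M ** transpose Y) ** Y" by (simp only: matrix_mul_assoc)
  also have "\<dots> = (X ** M) ** (Y ** M) ** Y" by (simp only: tY)
  also have "\<dots> = X ** M ** (Y ** M ** Y)" by (simp only: matrix_mul_assoc)
  also have "\<dots> = X ** M ** Y" by (simp only: b2)
  finally show ?thesis using a by simp
qed

lemma pinv_prop:
  fixes M :: "real^'n^'m"
  shows "M ** pinv M ** M = M"
proof -
  let ?Q = "\<lambda>P. M ** P ** M = M \<and> P ** M ** P = P \<and> transpose (M ** P) = M ** P \<and> transpose (P ** M) = P ** M"
  have "\<exists>!P. ?Q P" using pinv_exists[of M] pinv_unique[of M] by blast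
  then have "?Q (THE P. ?Q P)" by (rule theI')
  then show ?thesis unfolding pinv_def by blast
qed



lemma ineq_set_closed_convex:
  "closed (ineq_set C d blk2 w) \<and> convex (ineq_set C d blk2 w)"
proof -
  have e: "ineq_set C d blk2 w = (\<Inter>i\<in>{i. blk2 i = w}. {x. C $ i \<bullet> x \<le> d $ i})"
    by (auto simp: ineq_set_def)
  show ?thesis unfolding e
    by (auto intro!: closed_INT convex_INT closed_halfspace_le convex_halfspace_le)
qed

lemma norm_add_scaled_sq:
  fixes u q :: "'a::real_inner"
  shows "(norm (u + c *\<^sub>R q))^2 = (norm u)^2 + 2*c*(q \<bullet> u) + c^2 * (norm q)^2"
  unfolding power2_norm_eq_inner
  by (simp add: inner_add_left inner_add_right inner_commute power2_eq_square algebra_simps)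

lemma alg_aux:
  fixes a V b X N Y :: real
  shows "a = V + 2 * b * X + b^2 * N \<Longrightarrow> X = Y - N \<Longrightarrow> a = V - b * (2 - b) * N + 2 * b * Y"
  by (simp add: algebra_simps power2_eq_square)

lemma step_bound:
  fixes A :: "real^'n^'m" and b :: "real^'m" and C :: "real^'n^'p" and d :: "real^'p"
    and Y :: "(real^'n) set"
    and blk1 :: "'m \<Rightarrow> 'z::finite" and blk2 :: "'p \<Rightarrow> 'w"
    and P1 :: "'z pmf"
  assumes Ycc: "closed Y" "convex Y"
    and xs: "xs \<in> sol_set Y A b C d"
    and x: "x \<in> Y"
    and z: "z \<in> set_pmf P1"
    and delta: "0 < \<delta>" "\<delta> < 2"
    and beta: "0 < \<beta>" "\<beta> < 2"
  shows "(norm (ssp_step \<delta> \<beta> Y A b blk1 C d blk2 x z w - xs))^2 \<le> (norm (x - xs))^2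
     - min (\<delta> * (2 - \<delta>) / (2 * (kappa_block A blk1 P1)^2))
                         (min ((2 - \<delta>) / (4 * \<delta>)) (\<beta> * (2 - \<beta>) / 2))
        * ((infdist x (eq_set A b blk1 z))^2 + (infdist x (ineq_set C d blk2 w))^2)"
proof -
  define \<kappa> where "\<kappa> = kappa_block A blk1 P1"
  define M where "M = blk_mat A blk1 z"
  define r where "r = M *v x - blk_vec b blk1 z"
  define g where "g = transpose M *v r"
  define \<alpha> where "\<alpha> = \<delta> * (norm r)^2 / (norm g)^2"
  define v where "v = x - \<alpha> *\<^sub>R g"
  define K where "K = ineq_set C d blk2 w"
  define p where "p = closest_point K v"
  define zz where "zz = (1-\<beta>) *\<^sub>R v + \<beta> *\<^sub>R p"
  define T where "T = (norm r)^2 * (norm r)^2 / (norm g)^2"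
  define dA where "dA = infdist x (eq_set A b blk1 z)"
  define dC where "dC = infdist x K"
  have step: "ssp_step \<delta> \<beta> Y A b blk1 C d blk2 x z w = closest_point Y zz"
    unfolding ssp_step_def Let_def zz_def p_def K_def v_def \<alpha>_def g_def r_def M_def by simp
  have xsY: "xs \<in> Y" and Axs: "A *v xs = b" and Cxs: "\<And>i. (C *v xs) $ i \<le> d $ i"
    using xs by (auto simp: sol_set_def)
  have Mrow: "M $ i = (if blk1 i = z then A $ i else 0)" for i
    by (simp add: M_def blk_mat_def)
  have bM: "blk_vec b blk1 z = M *v xs"
    using Axs by (auto simp: vec_eq_iff blk_vec_def Mrow matrix_vector_mul_component)
  have r: "r = M *v (x - xs)" by (simp add: r_def bM matrix_vector_mult_diff_distrib)
  have gx: "g \<bullet> (x - xs) = (norm r)^2"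
  proof -
    have "g \<bullet> (x - xs) = (x - xs) \<bullet> (transpose M *v r)" by (simp add: g_def inner_commute)
    also have "\<dots> = (M *v (x - xs)) \<bullet> r" by (simp only: dot_transpose)
    finally show ?thesis by (simp add: r power2_norm_eq_inner)
  qed
  have g0: "r = 0" if "g = 0" using gx that by simp
  have T0: "T \<ge> 0" by (simp add: T_def)
  have vdist: "(norm (v - xs))^2 = (norm (x - xs))^2 - \<delta> * (2 - \<delta>) * T"
   and xv: "(norm (x - v))^2 = \<delta>^2 * T"
  proof -
    have "(norm (v - xs))^2 = (norm ((x - xs) - \<alpha> *\<^sub>R g))^2" by (simp add: v_def algebra_simps)
    also have "\<dots> = (norm (x - xs))^2 - 2 * \<alpha> * (g \<bullet> (x - xs)) + \<alpha>^2 * (norm g)^2"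
    proof -
      obtain u where u: "u = x - xs" by blast
      have "(norm (u - \<alpha> *\<^sub>R g))^2 = (norm u)^2 - 2 * \<alpha> * (g \<bullet> u) + \<alpha>^2 * (norm g)^2"
        unfolding power2_norm_eq_inner
        by (simp add: inner_diff_left inner_diff_right inner_commute power2_eq_square algebra_simps)
      then show ?thesis by (simp only: u)
    qed
    finally have e1: "(norm (v - xs))^2 = (norm (x - xs))^2 - 2 * \<alpha> * (norm r)^2 + \<alpha>^2 * (norm g)^2"
      by (simp add: gx)
    have e2: "(norm (x - v))^2 = \<alpha>^2 * (norm g)^2" by (simp add: v_def power_mult_distrib)
    show "(norm (v - xs))^2 = (norm (x - xs))^2 - \<delta> * (2 - \<delta>) * T"
      "(norm (x - v))^2 = \<delta>^2 * T"
    proof (atomize(full), cases "g = 0")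
      case True
      then show "(norm (v - xs))^2 = (norm (x - xs))^2 - \<delta> * (2 - \<delta>) * T \<and> (norm (x - v))^2 = \<delta>^2 * T"
        using g0 e1 e2 by (simp add: T_def)
    next
      case False
      then have "norm g \<noteq> 0" by simp
      then show "(norm (v - xs))^2 = (norm (x - xs))^2 - \<delta> * (2 - \<delta>) * T \<and> (norm (x - v))^2 = \<delta>^2 * T"
        using e1 e2 unfolding T_def \<alpha>_def by (simp add: field_simps power2_eq_square)
    qed
  qed
  have Kcc: "closed K" "convex K" using ineq_set_closed_convex[of C d blk2 w] unfolding K_def by auto
  have xsK: "xs \<in> K" using Cxs by (auto simp: K_def ineq_set_def matrix_vector_mul_component)
  have pK: "p \<in> K" unfolding p_def using Kcc xsK closest_point_in_set by blast
  have pdot: "(v - p) \<bullet> (xs - p) \<le> 0"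
    unfolding p_def using closest_point_dot[OF Kcc(2) Kcc(1) xsK] by simp
  have zzdist: "(norm (zz - xs))^2 \<le> (norm (v - xs))^2 - \<beta> * (2 - \<beta>) * (norm (v - p))^2"
  proof -
    have "zz - xs = (v - xs) + \<beta> *\<^sub>R (p - v)" by (simp add: zz_def algebra_simps)
    then have "(norm (zz - xs))^2 = (norm (v - xs))^2 + 2 * \<beta> * ((p - v) \<bullet> (v - xs)) + \<beta>^2 * (norm (p - v))^2"
      by (simp only: norm_add_scaled_sq)
    then have "(norm (zz - xs))^2 = (norm (v - xs))^2 + 2 * \<beta> * ((p - v) \<bullet> (v - xs)) + \<beta>^2 * (norm (v - p))^2"
      by (simp add: norm_minus_commute)
    moreover have "(p - v) \<bullet> (v - xs) = (v - p) \<bullet> (xs - p) - (norm (v - p))^2"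
      by (simp add: power2_norm_eq_inner inner_diff_left inner_diff_right inner_commute algebra_simps)
    ultimately have "(norm (zz - xs))^2 = (norm (v - xs))^2 - \<beta> * (2 - \<beta>) * (norm (v - p))^2 + 2 * \<beta> * ((v - p) \<bullet> (xs - p))"
      by (rule alg_aux)
    moreover have "2 * \<beta> * ((v - p) \<bullet> (xs - p)) \<le> 0"
      using pdot beta by (simp add: mult_nonneg_nonpos)
    ultimately show ?thesis by linarith
  qed
  have Yne: "Y \<noteq> {}" using x by auto
  have ynorm: "norm (closest_point Y zz - xs) \<le> norm (zz - xs)"
    using closest_point_lipschitz[OF Ycc(2) Ycc(1) Yne, of zz xs] closest_point_self[OF xsY]
    by (simp add: dist_norm)
  have dC: "dC \<le> norm (x - v) + norm (v - p)"
  proof -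
    have "dC \<le> dist x p" unfolding dC_def using pK by (rule infdist_le)
    also have "\<dots> \<le> norm (x - v) + norm (v - p)" by (metis dist_norm dist_triangle)
    finally show ?thesis .
  qed
  define Pm where "Pm = pinv M"
  define a where "a = spec_norm M"
  define pn where "pn = spec_norm Pm"
  have a0: "a \<ge> 0" and pn0: "pn \<ge> 0" unfolding a_def pn_def spec_norm_def
    by (auto intro!: onorm_pos_le)
  have normM: "norm (M *v y) \<le> a * norm y" for y
    unfolding a_def spec_norm_def by (rule onorm) simp
  have normP: "norm (Pm *v y) \<le> pn * norm y" for y
    unfolding pn_def spec_norm_def by (rule onorm) simp
  have kap: "a * pn \<le> \<kappa>"
    unfolding \<kappa>_def kappa_block_def a_def pn_def Pm_def M_def
    using z by (intro Max_ge) auto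
  have inE: "x - Pm *v r \<in> eq_set A b blk1 z"
  proof -
    have "M *v (x - Pm *v r) = M *v x - (M ** Pm ** M) *v (x - xs)"
      by (simp add: r matrix_vector_mult_diff_distrib matrix_vector_mul_assoc matrix_mul_assoc)
    also have "\<dots> = M *v xs" unfolding Pm_def pinv_prop
      by (simp add: matrix_vector_mult_diff_distrib)
    finally have e: "M *v (x - Pm *v r) = M *v xs" .
    show ?thesis unfolding eq_set_def
    proof (intro CollectI allI impI)
      fix i assume i: "blk1 i = z"
      have "A $ i \<bullet> (x - Pm *v r) = (M *v (x - Pm *v r)) $ i"
        by (simp add: matrix_vector_mul_component Mrow i)
      also have "\<dots> = (blk_vec b blk1 z) $ i" by (simp add: e bM)
      also have "\<dots> = b $ i" by (simp add: blk_vec_def i)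
      finally show "A $ i \<bullet> (x - Pm *v r) = b $ i" .
    qed
  qed
  have dAle: "dA \<le> pn * norm r"
  proof -
    have "dA \<le> dist x (x - Pm *v r)" unfolding dA_def using inE by (rule infdist_le)
    also have "\<dots> = norm (Pm *v r)" by (simp add: dist_norm)
    finally show ?thesis using normP[of r] by linarith
  qed
  have dA0: "dA \<ge> 0" unfolding dA_def by (rule infdist_nonneg)
  have ng: "norm g \<le> a * norm r"
  proof (cases "g = 0")
    case True then show ?thesis using a0 by simp
  next
    case False
    have "(norm g)^2 = g \<bullet> (transpose M *v r)"
      by (simp only: power2_norm_eq_inner g_def[symmetric])
    also have "\<dots> = (M *v g) \<bullet> r" by (simp only: dot_transpose)
    also have "\<dots> \<le> norm (M *v g) * norm r" by (rule norm_cauchy_schwarz)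
    also have "\<dots> \<le> a * norm g * norm r" using normM[of g] by (simp add: mult_right_mono)
    finally have "norm g * norm g \<le> norm g * (a * norm r)" by (simp add: power2_eq_square algebra_simps)
    then show ?thesis using False by simp
  qed
  have dAbound: "dA^2 / \<kappa>^2 \<le> T"
  proof (cases "\<kappa> = 0 \<or> g = 0")
    case True
    then show ?thesis
    proof
      assume "\<kappa> = 0" then show ?thesis using T0 by simp
    next
      assume "g = 0"
      then have "dA = 0" using g0 dAle dA0 by simp
      then show ?thesis using T0 by simp
    qed
  next
    case False
    then have k0: "\<kappa>^2 > 0" and g0': "(norm g)^2 > 0" by auto
    have "dA^2 * (norm g)^2 \<le> (pn * norm r)^2 * (a * norm r)^2"
      using dAle dA0 ng by (intro mult_mono power_mono) auto
    also have "\<dots> = (a * pn)^2 * ((norm r)^2 * (norm r)^2)" by (simp add: power_mult_distrib)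
    also have "\<dots> \<le> \<kappa>^2 * ((norm r)^2 * (norm r)^2)"
      using kap a0 pn0 by (intro mult_right_mono power_mono) auto
    finally have "dA^2 * (norm g)^2 \<le> \<kappa>^2 * ((norm r)^2 * (norm r)^2)" .
    then show ?thesis unfolding T_def using k0 g0' by (simp add: field_simps)
  qed
  define m1 where "m1 = \<delta> * (2 - \<delta>) / (2 * \<kappa>^2)"
  define m2 where "m2 = (2 - \<delta>) / (4 * \<delta>)"
  define m3 where "m3 = \<beta> * (2 - \<beta>) / 2"
  define \<mu> where "\<mu> = min m1 (min m2 m3)"
  have m1eq: "m1 * dA^2 = (\<delta> * (2 - \<delta>) / 2) * (dA^2 / \<kappa>^2)" unfolding m1_def by (simp add: field_simps)
  have mu0: "\<mu> \<ge> 0" unfolding \<mu>_def m1_def m2_def m3_def using delta beta by auto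
  have A1: "\<mu> * dA^2 \<le> \<delta> * (2 - \<delta>) * T / 2"
  proof -
    have "\<mu> * dA^2 \<le> m1 * dA^2" unfolding \<mu>_def by (intro mult_right_mono) auto
    also have "\<dots> \<le> (\<delta> * (2 - \<delta>) / 2) * T" unfolding m1eq using dAbound delta
      by (intro mult_left_mono) auto
    finally show ?thesis by simp
  qed
  have A2: "\<mu> * dC^2 \<le> \<delta> * (2 - \<delta>) * T / 2 + \<beta> * (2 - \<beta>) * (norm (v - p))^2"
  proof -
    have dC0: "dC \<ge> 0" unfolding dC_def by (rule infdist_nonneg)
    have "dC^2 \<le> (norm (x - v) + norm (v - p))^2" using dC dC0 by (intro power_mono) auto
    also have "\<dots> \<le> 2 * (norm (x - v))^2 + 2 * (norm (v - p))^2"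
      by (smt (verit) power2_sum sum_squares_bound)
    finally have "\<mu> * dC^2 \<le> \<mu> * (2 * (norm (x - v))^2 + 2 * (norm (v - p))^2)"
      using mu0 by (intro mult_left_mono) auto
    also have "\<dots> = 2 * \<mu> * (\<delta>^2 * T) + 2 * \<mu> * (norm (v - p))^2" by (simp add: xv algebra_simps)
    also have "\<dots> \<le> 2 * m2 * (\<delta>^2 * T) + 2 * m3 * (norm (v - p))^2"
      unfolding \<mu>_def using T0
      by (intro add_mono mult_right_mono mult_left_mono) auto
    also have "2 * m2 * (\<delta>^2 * T) = \<delta> * (2 - \<delta>) * T / 2"
      unfolding m2_def using delta by (simp add: field_simps power2_eq_square)
    also have "2 * m3 * (norm (v - p))^2 = \<beta> * (2 - \<beta>) * (norm (v - p))^2"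
      unfolding m3_def by simp
    finally show ?thesis .
  qed
  have "(norm (ssp_step \<delta> \<beta> Y A b blk1 C d blk2 x z w - xs))^2 \<le> (norm (zz - xs))^2"
    unfolding step using ynorm by (simp add: power_mono)
  also have "\<dots> \<le> (norm (x - xs))^2 - \<delta> * (2 - \<delta>) * T - \<beta> * (2 - \<beta>) * (norm (v - p))^2"
    using zzdist vdist by simp
  also have "\<dots> \<le> (norm (x - xs))^2 - \<mu> * (dA^2 + dC^2)"
  proof -
    have "\<mu> * (dA^2 + dC^2) = \<mu> * dA^2 + \<mu> * dC^2" by (simp add: distrib_left)
    then show ?thesis using A1 A2 by linarith
  qed
  finally show ?thesis unfolding \<mu>_def m1_def m2_def m3_def dA_def dC_def K_def \<kappa>_def .
qed



lemma exp_bind_finite: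
  fixes F :: "'b \<Rightarrow> real"
  assumes fM: "finite (set_pmf M)" and fN: "\<And>x. x \<in> set_pmf M \<Longrightarrow> finite (set_pmf (N x))"
    and F0: "\<And>y. 0 \<le> F y"
  shows "measure_pmf.expectation (bind_pmf M N) F
       = measure_pmf.expectation M (\<lambda>x. measure_pmf.expectation (N x) F)"
proof -
  have G0: "0 \<le> measure_pmf.expectation (N x) F" for x
    by (rule integral_nonneg_AE) (simp add: F0)
  have "(\<integral>\<^sup>+x. ennreal (F x) \<partial>measure_pmf (bind_pmf M N)) = (\<integral>\<^sup>+x. \<integral>\<^sup>+y. ennreal (F y) \<partial>N x \<partial>M)"
    by simp
  also have "\<dots> = (\<integral>\<^sup>+x. ennreal (measure_pmf.expectation (N x) F) \<partial>M)"
    by (intro nn_integral_cong_AE AE_pmfI nn_integral_eq_integral integrable_measure_pmf_finite fN)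
       (auto simp: F0)
  also have "\<dots> = ennreal (measure_pmf.expectation M (\<lambda>x. measure_pmf.expectation (N x) F))"
    by (intro nn_integral_eq_integral integrable_measure_pmf_finite fM) (auto simp: G0)
  finally have e: "(\<integral>\<^sup>+x. ennreal (F x) \<partial>measure_pmf (bind_pmf M N)) =
     ennreal (measure_pmf.expectation M (\<lambda>x. measure_pmf.expectation (N x) F))" .
  have "measure_pmf.expectation (bind_pmf M N) F = enn2real (\<integral>\<^sup>+x. ennreal (F x) \<partial>measure_pmf (bind_pmf M N))"
    by (rule integral_eq_nn_integral) (auto simp: F0)
  also have "\<dots> = measure_pmf.expectation M (\<lambda>x. measure_pmf.expectation (N x) F)"
    unfolding e by (rule enn2real_ennreal) (rule integral_nonneg_AE, simp add: G0)
  finally show ?thesis .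
qed

theorem theorem7:
  fixes A :: "real^'n^'m" and b :: "real^'m" and C :: "real^'n^'p" and d :: "real^'p"
    and Y :: "(real^'n) set"
    and blk1 :: "'m \<Rightarrow> 'z::finite" and blk2 :: "'p \<Rightarrow> 'w::finite"
    and P1 :: "'z pmf" and P2 :: "'w pmf"
    and c \<delta> \<beta> :: real and x0 :: "real^'n" and k :: nat
  assumes Ypoly: "polyhedron Y"
    and nonempty: "sol_set Y A b C d \<noteq> {}"
    and c_pos: "0 < c"
    and hoffman: "\<forall>u \<in> Y. (infdist u (sol_set Y A b C d))^2 \<le>
        c * measure_pmf.expectation (pair_pmf P1 P2)
              (\<lambda>(z, w). (infdist u (eq_set A b blk1 z))^2 + (infdist u (ineq_set C d blk2 w))^2)"
    and delta: "0 < \<delta>" "\<delta> < 2"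
    and beta: "0 < \<beta>" "\<beta> < 2"
    and x0: "x0 \<in> Y"
  shows "measure_pmf.expectation (ssp_dist \<delta> \<beta> Y A b blk1 P1 C d blk2 P2 x0 k)
            (\<lambda>x. (infdist x (sol_set Y A b C d))^2)
       \<le> (1 - (1 / c) * min (\<delta> * (2 - \<delta>) / (2 * (kappa_block A blk1 P1)^2))
                         (min ((2 - \<delta>) / (4 * \<delta>)) (\<beta> * (2 - \<beta>) / 2))) ^ k
          * (infdist x0 (sol_set Y A b C d))^2"
proof -
  define S where "S = sol_set Y A b C d"
  define F where "F x = (infdist x S)^2" for x
  define \<mu> where "\<mu> = min (\<delta> * (2 - \<delta>) / (2 * (kappa_block A blk1 P1)^2))
                         (min ((2 - \<delta>) / (4 * \<delta>)) (\<beta> * (2 - \<beta>) / 2))"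
  define q where "q = 1 - (1 / c) * \<mu>"
  define D where "D k = ssp_dist \<delta> \<beta> Y A b blk1 P1 C d blk2 P2 x0 k" for k
  define st where "st x = (\<lambda>(z, w). ssp_step \<delta> \<beta> Y A b blk1 C d blk2 x z w)" for x
  define H where "H x = (\<lambda>(z, w). (infdist x (eq_set A b blk1 z))^2 + (infdist x (ineq_set C d blk2 w))^2)" for x
  have Ycc: "closed Y" "convex Y"
    using Ypoly polyhedron_imp_closed polyhedron_imp_convex by auto
  have Sne: "S \<noteq> {}" using nonempty by (simp add: S_def)
  have Yne: "Y \<noteq> {}" using x0 by auto
  have Seq: "S = Y \<inter> (\<Inter>i. {x. A $ i \<bullet> x = b $ i}) \<inter> (\<Inter>i. {x. C $ i \<bullet> x \<le> d $ i})"
    by (auto simp: S_def sol_set_def vec_eq_iff matrix_vector_mul_component)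
  have Scl: "closed S" unfolding Seq
    by (intro closed_Int Ycc closed_INT ballI closed_hyperplane closed_halfspace_le)
  have mu0: "\<mu> \<ge> 0" unfolding \<mu>_def using delta beta by auto
  have F0: "F x \<ge> 0" for x by (simp add: F_def)
  have stY: "ssp_step \<delta> \<beta> Y A b blk1 C d blk2 x z w \<in> Y" for x z w
    unfolding ssp_step_def Let_def using closest_point_in_set[OF Ycc(1) Yne] by simp
  have Dsucc: "D (Suc k) = bind_pmf (D k) (\<lambda>x. map_pmf (st x) (pair_pmf P1 P2))" for k
    by (simp add: D_def st_def)
  have supp: "finite (set_pmf (D k)) \<and> set_pmf (D k) \<subseteq> Y" for k
  proof (induction k)
    case 0 then show ?case using x0 by (simp add: D_def)
  next
    case (Suc k)
    have "set_pmf (D (Suc k)) = (\<Union>x\<in>set_pmf (D k). st x ` set_pmf (pair_pmf P1 P2))"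
      by (simp add: Dsucc)
    moreover have "st x y \<in> Y" for x y by (cases y) (simp add: st_def stY)
    ultimately show ?case using Suc by auto
  qed
  have onestep: "measure_pmf.expectation (pair_pmf P1 P2) (\<lambda>y. F (st x y)) \<le> q * F x" if x: "x \<in> Y" for x
  proof -
    define xs where "xs = closest_point S x"
    have xsS: "xs \<in> S" unfolding xs_def using closest_point_in_set[OF Scl Sne] .
    have Fx: "F x = (norm (x - xs))^2"
      unfolding F_def xs_def infdist_eq_setdist setdist_closest_point[OF Scl Sne] by (simp add: dist_norm)
    have pw: "F (st x y) \<le> F x - \<mu> * H x y" if y: "y \<in> set_pmf (pair_pmf P1 P2)" for y
    proof -
      obtain z w where yzw: "y = (z, w)" by (cases y)
      have z: "z \<in> set_pmf P1" using y yzw by (simp add: set_pair_pmf)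
      have "infdist (st x y) S \<le> dist (st x y) xs" using xsS by (rule infdist_le)
      then have "F (st x y) \<le> (norm (st x y - xs))^2" unfolding F_def
        by (intro power_mono) (auto simp: dist_norm infdist_nonneg)
      also have "\<dots> \<le> F x - \<mu> * H x y"
        unfolding Fx yzw st_def H_def \<mu>_def
        using step_bound[OF Ycc xsS[unfolded S_def] x z delta beta, where w=w] by simp
      finally show ?thesis .
    qed
    have "measure_pmf.expectation (pair_pmf P1 P2) (\<lambda>y. F (st x y))
        \<le> measure_pmf.expectation (pair_pmf P1 P2) (\<lambda>y. F x - \<mu> * H x y)"
      by (intro integral_mono_AE integrable_measure_pmf_finite AE_pmfI pw) auto
    also have "\<dots> = F x - \<mu> * measure_pmf.expectation (pair_pmf P1 P2) (H x)"
      by (simp add: integrable_measure_pmf_finite)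
    also have "\<dots> \<le> q * F x"
    proof -
      have "F x \<le> c * measure_pmf.expectation (pair_pmf P1 P2) (H x)"
        using hoffman x unfolding F_def S_def H_def by blast
      then have "F x / c \<le> measure_pmf.expectation (pair_pmf P1 P2) (H x)"
        using c_pos by (simp add: divide_simps mult.commute)
      then have "\<mu> * (F x / c) \<le> \<mu> * measure_pmf.expectation (pair_pmf P1 P2) (H x)"
        using mu0 by (intro mult_left_mono)
      then show ?thesis unfolding q_def by (simp add: algebra_simps)
    qed
    finally show ?thesis .
  qed
  have rec: "measure_pmf.expectation (D (Suc k)) F \<le> q * measure_pmf.expectation (D k) F" for k
  proof -
    have "measure_pmf.expectation (D (Suc k)) F
        = measure_pmf.expectation (D k) (\<lambda>x. measure_pmf.expectation (map_pmf (st x) (pair_pmf P1 P2)) F)"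
      unfolding Dsucc using supp[of k] F0 by (intro exp_bind_finite) auto
    also have "\<dots> = measure_pmf.expectation (D k) (\<lambda>x. measure_pmf.expectation (pair_pmf P1 P2) (\<lambda>y. F (st x y)))"
      by simp
    also have "\<dots> \<le> measure_pmf.expectation (D k) (\<lambda>x. q * F x)"
      using supp[of k] onestep
      by (intro integral_mono_AE integrable_measure_pmf_finite AE_pmfI) auto
    also have "\<dots> = q * measure_pmf.expectation (D k) F" by simp
    finally show ?thesis .
  qed
  have Enn: "measure_pmf.expectation (D k) F \<ge> 0" for k
    by (rule integral_nonneg_AE) (simp add: F0)
  have E0: "measure_pmf.expectation (D 0) F = F x0" by (simp add: D_def)
  have main: "measure_pmf.expectation (D k) F \<le> q ^ k * F x0"
  proof (cases "q \<ge> 0")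
    case True
    show ?thesis
    proof (induction k)
      case 0 then show ?case using E0 by simp
    next
      case (Suc k)
      have "measure_pmf.expectation (D (Suc k)) F \<le> q * measure_pmf.expectation (D k) F" by (rule rec)
      also have "\<dots> \<le> q * (q ^ k * F x0)" using Suc True by (rule mult_left_mono)
      finally show ?case by simp
    qed
  next
    case False
    have "0 \<le> measure_pmf.expectation (pair_pmf P1 P2) (\<lambda>y. F (st x0 y))"
      by (rule integral_nonneg_AE) (simp add: F0)
    also have "\<dots> \<le> q * F x0" by (rule onestep[OF x0])
    finally have "F x0 = 0" using False F0[of x0] by (smt (verit, best) zero_le_mult_iff)
    show ?thesis
    proof (cases k)
      case 0 then show ?thesis using E0 by simp
    next
      case (Suc j)
      have "measure_pmf.expectation (D k) F \<le> q * measure_pmf.expectation (D j) F" unfolding Suc by (rule rec)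
      also have "\<dots> \<le> 0" using False Enn[of j] by (simp add: mult_nonpos_nonneg)
      finally show ?thesis using \<open>F x0 = 0\<close> by simp
    qed
  qed
  then show ?thesis unfolding D_def F_def q_def \<mu>_def S_def .
qed

end
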